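(* Let $p=\alpha(\alpha+1)>2$ with $\alpha>0$, let $c_p=\frac{1+z_p}{1-z_p}$, $a_p=h_{c_p}'(z_p)/L_\alpha'(z_p)$, and let $\ell_p$ be the tangent line to the graph of $h_{c_p}$ at $z_p$. Then $a_pL_\alpha$ and $h_{c_p}$ have the same value ($0$) and the same derivative at $z_p$, and on $[z_p,1]$ $$h_{c_p}\le \ell_p\le a_pL_\alpha ,$$ i.e. $\ell_p$ separates the graphs of $a_pL_\alpha$ and $h_{c_p}$ on $(z_p,1)$.
   Context: $L_\alpha$ is the solution on $(-1,1)$ of $(1-s^2)y''-2sy'+\alpha(\alpha+1)y=0$ bounded near $1$ with $L_\alpha(1)=1$ (i.e. ${}_2F_1(-\alpha,\alpha+1;1;\frac{1-s}{2})$); $z_p$ is its largest zero in $(-1,1)$; $h_c(s)=\big(\frac{1+s}{2}\big)^p-c^p\big(\frac{1-s}{2}\big)^p$. *)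

theory Defs
  imports "HOL-Analysis.Analysis"
begin

text \<open>The Legendre function L_alpha(s) = 2F1(-alpha, alpha+1; 1; (1-s)/2),
  given by its hypergeometric series (convergent for s in (-1,1]).\<close>
definition legendreL :: "real \<Rightarrow> real \<Rightarrow> real" where
  "legendreL \<alpha> s = (\<Sum>n. pochhammer (-\<alpha>) n * pochhammer (\<alpha> + 1) n
                          / (fact n)^2 * ((1 - s) / 2) ^ n)"

definition zp :: "real \<Rightarrow> real" where
  "zp \<alpha> = (GREATEST s. s \<in> {-1<..<1} \<and> legendreL \<alpha> s = 0)"

definition hc :: "real \<Rightarrow> real \<Rightarrow> real \<Rightarrow> real" where
  "hc p c s = ((1 + s) / 2) powr p - c powr p * ((1 - s) / 2) powr p"

end

theory Submission
  imports Defs "HOL-Real_Asymp.Real_Asymp"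
begin


definition cL :: "real \<Rightarrow> nat \<Rightarrow> real" where
  "cL \<alpha> n = pochhammer (-\<alpha>) n * pochhammer (\<alpha> + 1) n / (fact n)^2"

lemma cL_Suc: "cL \<alpha> (Suc n) = cL \<alpha> n * ((real n - \<alpha>) * (real n + \<alpha> + 1) / (real n + 1)^2)"
  unfolding cL_def pochhammer_Suc fact_Suc
  by (simp add: field_simps power2_eq_square of_nat_Suc)

lemma cL_0: "cL \<alpha> 0 = 1" by (simp add: cL_def)

lemma legendreL_eq: "legendreL \<alpha> s = (\<Sum>n. cL \<alpha> n * ((1-s)/2)^n)"
  by (simp add: legendreL_def cL_def)

lemma cL_summable:
  assumes t: "norm t < 1"
  shows "summable (\<lambda>n. cL \<alpha> n * t^n)"
proof -
  define q where "q n = (real n - \<alpha>) * (real n + \<alpha> + 1) / (real n + 1)^2" for n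
  have lim: "q \<longlonglongrightarrow> 1" unfolding q_def by real_asymp
  define r where "r = (1 + \<bar>t\<bar>) / 2"
  have r1: "r < 1" using t by (simp add: r_def)
  show ?thesis
  proof (cases "t = 0")
    case True
    show ?thesis using True by (intro summable_ratio_test[of "1/2" 0]) (auto simp: power_0_left)
  next
    case False
    have b: "1 < r / \<bar>t\<bar>" using False t by (simp add: r_def field_simps)
    have ev: "eventually (\<lambda>n. q n < r / \<bar>t\<bar> \<and> q n > 0) sequentially"
      using order_tendstoD(2)[OF lim b] order_tendstoD(1)[OF lim, of 0] by (auto elim: eventually_elim2)
    then obtain N where N: "\<And>n. n \<ge> N \<Longrightarrow> q n < r / \<bar>t\<bar> \<and> q n > 0"
      by (auto simp: eventually_sequentially)
    show ?thesis
    proof (rule summable_ratio_test[OF r1, of N])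
      fix n assume "n \<ge> N"
      with N have qn: "q n < r / \<bar>t\<bar>" "q n > 0" by auto
      have "norm (cL \<alpha> (Suc n) * t ^ Suc n) = \<bar>cL \<alpha> n\<bar> * \<bar>t\<bar>^n * (q n * \<bar>t\<bar>)"
        by (simp add: cL_Suc q_def[symmetric] abs_mult power_abs qn(2) less_imp_le) 
      also have "\<dots> \<le> \<bar>cL \<alpha> n\<bar> * \<bar>t\<bar>^n * r"
        using qn False by (intro mult_left_mono) (auto simp: field_simps)
      finally show "norm (cL \<alpha> (Suc n) * t ^ Suc n) \<le> r * norm (cL \<alpha> n * t ^ n)"
        by (simp add: abs_mult power_abs mult_ac)
    qed
  qed
qed

definition PL :: "real \<Rightarrow> real \<Rightarrow> real" where "PL \<alpha> t = (\<Sum>n. cL \<alpha> n * t^n)"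
definition PL1 :: "real \<Rightarrow> real \<Rightarrow> real" where "PL1 \<alpha> t = (\<Sum>n. diffs (cL \<alpha>) n * t^n)"
definition PL2 :: "real \<Rightarrow> real \<Rightarrow> real" where "PL2 \<alpha> t = (\<Sum>n. diffs (diffs (cL \<alpha>)) n * t^n)"

lemma cL_summable1: "norm t < 1 \<Longrightarrow> summable (\<lambda>n. diffs (cL \<alpha>) n * t^n)"
  by (rule termdiff_converges[where K=1]) (auto intro: cL_summable)

lemma cL_summable2: "norm t < 1 \<Longrightarrow> summable (\<lambda>n. diffs (diffs (cL \<alpha>)) n * t^n)"
  by (rule termdiff_converges[where K=1]) (auto intro: cL_summable1)

lemma PL_deriv: "norm t < 1 \<Longrightarrow> DERIV (PL \<alpha>) t :> PL1 \<alpha> t"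
  unfolding PL_def PL1_def by (rule termdiffs_strong'[where K=1]) (auto intro: cL_summable)

lemma PL1_deriv: "norm t < 1 \<Longrightarrow> DERIV (PL1 \<alpha>) t :> PL2 \<alpha> t"
  unfolding PL1_def PL2_def by (rule termdiffs_strong'[where K=1]) (auto intro: cL_summable1)

definition dL :: "real \<Rightarrow> nat \<Rightarrow> real" where
  "dL \<alpha> n = (if n = 0 then 0 else real n * cL \<alpha> n - real (n-1) * cL \<alpha> (n-1))"

lemma dL_sums:
  assumes t: "norm t < 1"
  shows "(\<lambda>n. dL \<alpha> n * t^n) sums (t * (1 - t) * PL1 \<alpha> t)"
proof -
  define f where "f n = real n * cL \<alpha> n * t^n" for n
  define g where "g n = (if n = 0 then 0 else real (n-1) * cL \<alpha> (n-1) * t^n)" for n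
  have s1: "(\<lambda>n. diffs (cL \<alpha>) n * t^n) sums PL1 \<alpha> t"
    unfolding PL1_def using cL_summable1[OF t] by (rule summable_sums)
  have "(\<lambda>n. t * (diffs (cL \<alpha>) n * t^n)) sums (t * PL1 \<alpha> t)" by (rule sums_mult[OF s1])
  moreover have "(\<lambda>n. t * (diffs (cL \<alpha>) n * t^n)) = (\<lambda>n. f (Suc n))"
    by (auto simp: f_def diffs_def)
  ultimately have "(\<lambda>n. f (Suc n)) sums (t * PL1 \<alpha> t)" by simp
  hence "f sums (t * PL1 \<alpha> t + f 0)" using sums_Suc_iff[of f] by blast
  hence sf: "f sums (t * PL1 \<alpha> t)" by (simp add: f_def)
  have "(\<lambda>n. t * f n) sums (t * (t * PL1 \<alpha> t))" by (rule sums_mult[OF sf])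
  moreover have "(\<lambda>n. t * f n) = (\<lambda>n. g (Suc n))"
    by (auto simp: f_def g_def)
  ultimately have "(\<lambda>n. g (Suc n)) sums (t * (t * PL1 \<alpha> t))" by simp
  hence "g sums (t * (t * PL1 \<alpha> t) + g 0)" using sums_Suc_iff[of g] by blast
  hence sg: "g sums (t * (t * PL1 \<alpha> t))" by (simp add: g_def)
  have "(\<lambda>n. f n - g n) sums (t * PL1 \<alpha> t - t * (t * PL1 \<alpha> t))" by (rule sums_diff[OF sf sg])
  moreover have "(\<lambda>n. f n - g n) = (\<lambda>n. dL \<alpha> n * t^n)"
    by (auto simp: f_def g_def dL_def algebra_simps)
  ultimately show ?thesis by (simp add: algebra_simps)
qed

lemma diffs_dL: "diffs (dL \<alpha>) n = - (\<alpha> * (\<alpha> + 1)) * cL \<alpha> n"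
proof -
  have h: "real (Suc n) * real (Suc n) * cL \<alpha> (Suc n) = cL \<alpha> n * ((real n - \<alpha>) * (real n + \<alpha> + 1))"
  proof -
    have aux: "x = y \<Longrightarrow> y \<noteq> 0 \<Longrightarrow> x*x*(c*(A/y^2)) = c*A" for x y c A :: real by (simp add: power2_eq_square)
    show ?thesis unfolding cL_Suc of_nat_Suc by (rule aux) (simp, linarith)
  qed
  have "diffs (dL \<alpha>) n = real (Suc n) * real (Suc n) * cL \<alpha> (Suc n) - real (Suc n) * real n * cL \<alpha> n"
    unfolding diffs_def dL_def by (simp add: algebra_simps)
  also have "\<dots> = - (\<alpha> * (\<alpha> + 1)) * cL \<alpha> n" unfolding h by (simp add: algebra_simps)
  finally show ?thesis .
qed

lemma ode_t:
  assumes t: "norm t < 1"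
  shows "(1 - 2*t) * PL1 \<alpha> t + t * (1 - t) * PL2 \<alpha> t + \<alpha> * (\<alpha> + 1) * PL \<alpha> t = 0"
proof -
  have sd: "summable (\<lambda>n. dL \<alpha> n * x^n)" if "norm x < 1" for x
    using dL_sums[OF that] by (rule sums_summable)
  have D1: "DERIV (\<lambda>x. \<Sum>n. dL \<alpha> n * x^n) t :> (\<Sum>n. diffs (dL \<alpha>) n * t^n)"
    by (rule termdiffs_strong'[where K=1]) (use sd t in auto)
  have "(\<Sum>n. diffs (dL \<alpha>) n * t^n) = (\<Sum>n. (- (\<alpha> * (\<alpha> + 1))) * (cL \<alpha> n * t^n))"
    by (simp add: diffs_dL mult_ac)
  also have "\<dots> = - (\<alpha> * (\<alpha> + 1)) * PL \<alpha> t"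
    unfolding PL_def by (rule suminf_mult[OF cL_summable[OF t]])
  finally have e: "(\<Sum>n. diffs (dL \<alpha>) n * t^n) = - (\<alpha> * (\<alpha> + 1)) * PL \<alpha> t" .
  have D2: "DERIV (\<lambda>x. x * (1 - x) * PL1 \<alpha> x) t :> (\<Sum>n. diffs (dL \<alpha>) n * t^n)"
  proof (rule has_field_derivative_transform_within_open[OF D1, of "ball 0 1"])
    show "t \<in> ball 0 1" using t by simp
    fix x :: real assume "x \<in> ball 0 1"
    hence "norm x < 1" by simp
    thus "(\<Sum>n. dL \<alpha> n * x^n) = x * (1 - x) * PL1 \<alpha> x" using dL_sums sums_unique by metis
  qed simp
  have D3: "DERIV (\<lambda>x. x * (1 - x) * PL1 \<alpha> x) t :> (1 - 2*t) * PL1 \<alpha> t + t * (1 - t) * PL2 \<alpha> t"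
    by (auto intro!: derivative_eq_intros PL1_deriv[OF t] simp: algebra_simps)
  from DERIV_unique[OF D2 D3] e show ?thesis by simp
qed



definition Ly1 :: "real \<Rightarrow> real \<Rightarrow> real" where "Ly1 \<alpha> s = - PL1 \<alpha> ((1-s)/2) / 2"
definition Ly2 :: "real \<Rightarrow> real \<Rightarrow> real" where "Ly2 \<alpha> s = PL2 \<alpha> ((1-s)/2) / 4"

lemma legendreL_PL: "legendreL \<alpha> = (\<lambda>s. PL \<alpha> ((1-s)/2))"
  by (auto simp: legendreL_eq PL_def)

lemma L_deriv: assumes "-1 < s" "s < 3" shows "DERIV (legendreL \<alpha>) s :> Ly1 \<alpha> s"
proof -
  have n: "norm ((1-s)/2) < 1" using assms by auto
  have g: "DERIV (\<lambda>s. (1-s)/2) s :> -1/2" by (auto intro!: derivative_eq_intros)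
  have "DERIV (\<lambda>s. PL \<alpha> ((1-s)/2)) s :> PL1 \<alpha> ((1-s)/2) * (- 1/2)"
    by (rule DERIV_chain2[OF _ g]) (rule PL_deriv[OF n])
  thus ?thesis by (simp add: legendreL_PL Ly1_def)
qed

lemma Ly1_deriv: assumes "-1 < s" "s < 3" shows "DERIV (Ly1 \<alpha>) s :> Ly2 \<alpha> s"
proof -
  have n: "norm ((1-s)/2) < 1" using assms by auto
  have g: "DERIV (\<lambda>s. (1-s)/2) s :> -1/2" by (auto intro!: derivative_eq_intros)
  have "DERIV (\<lambda>s. PL1 \<alpha> ((1-s)/2)) s :> PL2 \<alpha> ((1-s)/2) * (- 1/2)"
    by (rule DERIV_chain2[OF _ g]) (rule PL1_deriv[OF n])
  hence "DERIV (\<lambda>s. - PL1 \<alpha> ((1-s)/2) / 2) s :> - (PL2 \<alpha> ((1-s)/2) * (- 1/2)) / 2"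
    by (auto intro!: derivative_eq_intros)
  thus ?thesis by (simp add: Ly1_def[abs_def] Ly2_def)
qed

lemma L_ode: assumes "-1 < s" "s < 3"
  shows "(1 - s^2) * Ly2 \<alpha> s - 2 * s * Ly1 \<alpha> s + \<alpha> * (\<alpha> + 1) * legendreL \<alpha> s = 0"
proof -
  have n: "norm ((1-s)/2) < 1" using assms by auto
  have e: "(1 - 2*((1-s)/2)) * PL1 \<alpha> ((1-s)/2) + ((1-s)/2) * (1 - (1-s)/2) * PL2 \<alpha> ((1-s)/2)
     + \<alpha> * (\<alpha> + 1) * PL \<alpha> ((1-s)/2) = 0" by (rule ode_t[OF n])
  have "(1 - s^2) * Ly2 \<alpha> s - 2 * s * Ly1 \<alpha> s + \<alpha> * (\<alpha> + 1) * legendreL \<alpha> s =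
     (1 - 2*((1-s)/2)) * PL1 \<alpha> ((1-s)/2) + ((1-s)/2) * (1 - (1-s)/2) * PL2 \<alpha> ((1-s)/2)
     + \<alpha> * (\<alpha> + 1) * PL \<alpha> ((1-s)/2)"
    by (simp add: legendreL_PL Ly1_def Ly2_def power2_eq_square field_simps)
  with e show ?thesis by simp
qed

lemma L_one: "legendreL \<alpha> 1 = 1"
  by (simp add: legendreL_eq cL_0)



lemma powr_succ: "0 < w \<Longrightarrow> w powr (r + 1) = w powr r * w" for w r :: real
  by (simp add: powr_add)

lemma pw_deriv1: "-1 < (s::real) \<Longrightarrow> DERIV (\<lambda>s. (1+s) powr r) s :> r * (1+s) powr (r-1)"
proof -
  assume s: "-1 < s"
  have g: "DERIV (\<lambda>s. 1+s) s :> 1" by (auto intro!: derivative_eq_intros)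
  have "DERIV (\<lambda>s. (1+s) powr r) s :> r * (1+s) powr (r-1) * 1"
    by (rule DERIV_chain2[OF _ g]) (rule has_real_derivative_powr, use s in simp)
  thus ?thesis by simp
qed

lemma pw_deriv0: "0 < (s::real) \<Longrightarrow> DERIV (\<lambda>s. s powr r) s :> r * s powr (r-1)"
  by (rule has_real_derivative_powr)

context
  fixes y yd ydd :: "real \<Rightarrow> real" and p :: real
  assumes p2: "p > 2"
    and dy: "\<And>s. -1 < s \<Longrightarrow> s < 3 \<Longrightarrow> DERIV y s :> yd s"
    and dy1: "\<And>s. -1 < s \<Longrightarrow> s < 3 \<Longrightarrow> DERIV yd s :> ydd s"
    and ode: "\<And>s. -1 < s \<Longrightarrow> s < 3 \<Longrightarrow> (1 - s^2) * ydd s - 2 * s * yd s + p * y s = 0"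
    and y_one: "y 1 = 1"
begin

lemma y_cont: "-1 < a \<Longrightarrow> b < 3 \<Longrightarrow> continuous_on {a..b} y"
  by (intro continuous_at_imp_continuous_on ballI DERIV_isCont[OF dy]) auto

lemma e_bound:
  assumes w0: "0 < w0" "w0 \<le> w" "w \<le> 2"
  shows "2*(p-1)^2 * w powr (p-2) - p*(p-2) * w powr (p-1) \<ge> p * w0 powr (p-1)
     \<or> 2*(p-1)^2 * w powr (p-2) - p*(p-2) * w powr (p-1) \<ge> 2 powr (p-1)"
proof (cases "w \<le> 2*(p-1)/p")
  case True
  have wp: "0 < w" using w0 by simp
  have e1: "w powr (p-1) = w powr (p-2) * w" using powr_succ[OF wp, of "p-2"] by simp
  have "p * w \<le> 2*(p-1)" using True p2 by (simp add: field_simps)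
  hence "p * w * (p-1) \<le> 2*(p-1)*(p-1)" using p2 by (intro mult_right_mono) auto
  hence h: "p * w \<le> 2*(p-1)^2 - p*(p-2)*w" by (simp add: power2_eq_square algebra_simps)
  have "p * w0 powr (p-1) \<le> p * w powr (p-1)"
    using w0 p2 by (intro mult_left_mono powr_mono2) auto
  also have "\<dots> = w powr (p-2) * (p * w)" using e1 by simp
  also have "\<dots> \<le> w powr (p-2) * (2*(p-1)^2 - p*(p-2)*w)" by (intro mult_left_mono h) simp
  also have "\<dots> = 2*(p-1)^2 * w powr (p-2) - p*(p-2) * w powr (p-1)"
    using e1 by (simp add: algebra_simps)
  finally show ?thesis by simp
next
  case False
  define e where "e x = 2*(p-1)^2 * x powr (p-2) - p*(p-2) * x powr (p-1)" for x
  define e' where "e' x = 2*(p-1)^2 * ((p-2) * x powr (p-2-1)) - p*(p-2) * ((p-1) * x powr (p-1-1))" for x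
  have wp: "0 < w" using w0 by simp
  show ?thesis
  proof (cases "w = 2")
    case True
    have "(2::real) powr (p-1) = 2 powr (p-2) * 2" using powr_succ[of 2 "p-2"] by simp
    hence "e 2 = 2 powr (p-1)" unfolding e_def by (simp add: power2_eq_square algebra_simps)
    thus ?thesis using True e_def by simp
  next
    case w2: False
    hence wl: "w < 2" using w0 by simp
    have "\<exists>\<xi>. w < \<xi> \<and> \<xi> < 2 \<and> e 2 - e w = (2 - w) * e' \<xi>"
      by (rule MVT2[OF wl]) (unfold e_def e'_def, use wp in \<open>auto intro!: derivative_eq_intros pw_deriv0\<close>)
    then obtain \<xi> where xi: "w < \<xi>" "\<xi> < 2" "e 2 - e w = (2 - w) * e' \<xi>" by blast
    have xp: "0 < \<xi>" using xi wp by simp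
    have "p - 2 - 1 + 1 = p - 2" by simp
    hence e2: "\<xi> powr (p-2) = \<xi> powr (p-2-1) * \<xi>" using powr_succ[OF xp, of "p-2-1"] by simp
    have "e' \<xi> = (p-1)*(p-2) * \<xi> powr (p-2-1) * (2*(p-1) - p*\<xi>)"
      unfolding e'_def using e2 by (simp add: power2_eq_square algebra_simps)
    moreover have "2*(p-1) - p*\<xi> \<le> 0"
    proof -
      have "2*(p-1) < p * w" using False p2 by (simp add: field_simps)
      also have "p * w < p * \<xi>" using xi p2 by simp
      finally show ?thesis by simp
    qed
    moreover have "0 \<le> (p-1)*(p-2) * \<xi> powr (p-2-1)" using p2 by simp
    ultimately have "e' \<xi> \<le> 0" by (simp add: mult_nonneg_nonpos)
    hence "(2 - w) * e' \<xi> \<le> 0" using wl by (simp add: mult_nonneg_nonpos)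
    hence "e 2 \<le> e w" using xi by simp
    moreover have "(2::real) powr (p-1) = 2 powr (p-2) * 2" using powr_succ[of 2 "p-2"] by simp
    hence "e 2 = 2 powr (p-1)" unfolding e_def by (simp add: power2_eq_square algebra_simps)
    ultimately show ?thesis unfolding e_def by simp
  qed
qed


lemma zero_exists:
  "\<exists>t. 2 * p powr (-1/(p-1)) - 1 \<le> t \<and> t < 1 \<and> y t = 0"
proof -
  define w0 where "w0 = 2 * p powr (-1/(p-1))"
  define K where "K = w0 powr (p-1)"
  define s0 where "s0 = w0 - 1"
  have w0p: "0 < w0" using p2 by (simp add: w0_def)
  have "p powr (-1/(p-1)) < 1" using p2 by (intro powr_less_one) (auto simp: field_simps)
  hence w02: "w0 < 2" by (simp add: w0_def)
  have pK: "p * K = 2 powr (p-1)"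
  proof -
    have "K = 2 powr (p-1) * (p powr (-1/(p-1))) powr (p-1)"
      unfolding K_def w0_def using p2 by (simp add: powr_mult abs_of_nonneg)
    also have "(p powr (-1/(p-1))) powr (p-1) = p powr (-1)"
      using p2 by (simp add: powr_powr)
    also have "\<dots> = 1 / p" using p2 by (simp add: powr_minus_divide abs_of_pos[of p])
    finally show ?thesis using p2 by simp
  qed
  define v where "v s = (1+s) powr (p-1) - K" for s
  define v1 where "v1 s = (p-1) * (1+s) powr (p-2)" for s
  define v2 where "v2 s = (p-1) * ((p-2) * (1+s) powr (p-2-1))" for s
  have dv: "DERIV v s :> v1 s" if "-1 < s" for s
  proof -
    have "DERIV (\<lambda>s. (1+s) powr (p-1) - K) s :> (p-1)*(1+s) powr (p-1-1) - 0"
      by (rule DERIV_diff[OF pw_deriv1[OF that] DERIV_const])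
    moreover have "p - 1 - 1 = p - 2" by simp
    ultimately show ?thesis by (simp add: v_def[abs_def] v1_def)
  qed
  have dv1: "DERIV v1 s :> v2 s" if "-1 < s" for s
  proof -
    have "DERIV (\<lambda>s. (p-1) * (1+s) powr (p-2)) s :> (p-1) * ((p-2)*(1+s) powr (p-2-1))"
      by (rule DERIV_cmult[OF pw_deriv1[OF that]])
    thus ?thesis by (simp add: v1_def[abs_def] v2_def)
  qed
  define E where "E s = (1 - s^2) * v2 s - 2 * s * v1 s + p * v s" for s
  have Epos: "E s \<ge> 0" if "s0 \<le> s" "s \<le> 1" for s
  proof -
    define w where "w = 1 + s"
    have wp: "0 < w" "w0 \<le> w" "w \<le> 2" using that w0p by (auto simp: w_def s0_def)
    define a where "a = w powr (p-2-1)"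
    have "p - 2 - 1 + 1 = p - 2" "p - 2 + 1 = p - 1" by simp_all
    hence a1: "w powr (p-2) = a * w" and a2: "w powr (p-1) = a * w * w"
      using powr_succ[OF wp(1), of "p-2-1"] powr_succ[OF wp(1), of "p-2"] by (simp_all add: a_def)
    have "E s = 2*(p-1)^2 * w powr (p-2) - p*(p-2) * w powr (p-1) - p * K"
      unfolding E_def v_def v1_def v2_def w_def[symmetric] a_def[symmetric] a1 a2
      using w_def by (simp add: power2_eq_square algebra_simps)
    moreover have "p * K = p * w0 powr (p-1)" by (simp add: K_def)
    ultimately show ?thesis using e_bound[OF w0p wp(2) wp(3)] pK by auto
  qed
  have "\<not> (\<forall>s\<in>{s0..1}. y s > 0)"
  proof
    assume pos: "\<forall>s\<in>{s0..1}. y s > 0"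
    define W where "W s = (1 - s^2) * (yd s * v s - y s * v1 s)" for s
    define W' where "W' s = - y s * E s" for s
    have dW: "DERIV W s :> W' s" if "s0 \<le> s" "s \<le> 1" for s
    proof -
      have s: "-1 < s" "s < 3" using that w0p by (auto simp: s0_def)
      have "DERIV W s :> (- (2 * s)) * (yd s * v s - y s * v1 s) + (1 - s^2) * ((ydd s * v s + yd s * v1 s) - (yd s * v1 s + y s * v2 s))"
        unfolding W_def by (auto intro!: derivative_eq_intros dy[OF s] dy1[OF s] dv[OF s(1)] dv1[OF s(1)] simp: power2_eq_square algebra_simps)
      moreover have "(- (2 * s)) * (yd s * v s - y s * v1 s) + (1 - s^2) * ((ydd s * v s + yd s * v1 s) - (yd s * v1 s + y s * v2 s))
          = W' s + v s * ((1 - s^2) * ydd s - 2 * s * yd s + p * y s)"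
        unfolding W'_def E_def by (simp add: algebra_simps)
      ultimately show ?thesis using ode[OF s] by simp
    qed
    have s01: "s0 < 1" using w02 by (simp add: s0_def)
    obtain \<xi> where xi: "s0 < \<xi>" "\<xi> < 1" "W 1 - W s0 = (1 - s0) * W' \<xi>"
      using MVT2[OF s01, of W W'] dW by auto
    have "y \<xi> > 0" using pos xi by auto
    hence "W' \<xi> \<le> 0" using xi Epos[of \<xi>] unfolding W'_def by simp
    hence "W 1 - W s0 \<le> 0" using xi by (simp add: mult_nonneg_nonpos)
    moreover have "W 1 = 0" by (simp add: W_def)
    moreover have "W s0 < 0"
    proof -
      have "v s0 = 0" by (simp add: v_def K_def s0_def)
      moreover have "v1 s0 > 0" using p2 w0p by (simp add: v1_def s0_def)
      moreover have "1 - s0^2 > 0"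
      proof -
        have "1 - s0^2 = (2 - w0) * w0" by (simp add: s0_def power2_eq_square algebra_simps)
        thus ?thesis using w0p w02 by simp
      qed
      moreover have "y s0 > 0" using pos s01 by auto
      ultimately show ?thesis by (simp add: W_def mult_pos_neg)
    qed
    ultimately show False by simp
  qed
  then obtain t where t: "s0 \<le> t" "t \<le> 1" "y t \<le> 0" by (auto simp: not_less)
  have t1: "t < 1" using t y_one by (cases "t = 1") auto
  have "\<exists>x. t \<le> x \<and> x \<le> 1 \<and> y x = 0"
    by (rule IVT') (use t y_one in \<open>auto intro!: y_cont\<close>, use t w0p in \<open>simp add: s0_def\<close>)
  then obtain x where x: "t \<le> x" "x \<le> 1" "y x = 0" by blast
  have "x < 1" using x y_one by (cases "x = 1") auto
  thus ?thesis using x t unfolding s0_def w0_def by (intro exI[of _ x]) auto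
qed

lemma greatest_zero:
  obtains z where "2 * p powr (-1/(p-1)) - 1 \<le> z" "-1 < z" "z < 1" "y z = 0"
    "\<And>x. -1 < x \<Longrightarrow> x < 1 \<Longrightarrow> y x = 0 \<Longrightarrow> x \<le> z"
    "\<And>x. z < x \<Longrightarrow> x \<le> 1 \<Longrightarrow> y x > 0"
proof -
  obtain t0 where t0: "2 * p powr (-1/(p-1)) - 1 \<le> t0" "t0 < 1" "y t0 = 0"
    using zero_exists by blast
  have "0 < p powr (-1/(p-1))" using p2 by simp
  hence t0m: "-1 < t0" using t0 by linarith
  define T where "T = {x \<in> {t0..1}. y x = 0}"
  have cl: "closed T" unfolding T_def
    by (rule continuous_closed_preimage_constant[OF y_cont]) (use t0m in auto)
  have "bounded T" by (rule bounded_subset[of "{t0..1}"]) (auto simp: T_def)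
  with cl have "compact T" by (simp add: compact_eq_bounded_closed)
  moreover have "t0 \<in> T" using t0 by (simp add: T_def)
  hence "T \<noteq> {}" by blast
  ultimately obtain z where z: "z \<in> T" "\<And>x. x \<in> T \<Longrightarrow> x \<le> z"
    using compact_attains_sup by metis
  have zz: "t0 \<le> z" "z \<le> 1" "y z = 0" using z(1) by (auto simp: T_def)
  have z1: "z < 1" using zz y_one by (cases "z = 1") auto
  show ?thesis
  proof (rule that)
    show "2 * p powr (-1/(p-1)) - 1 \<le> z" "-1 < z" "z < 1" "y z = 0" using zz z1 t0 t0m by auto
    fix x
    show "x \<le> z" if "-1 < x" "x < 1" "y x = 0"
    proof (cases "x \<le> t0")
      case True thus ?thesis using zz by simp
    next
      case False thus ?thesis using that z(2)[of x] by (auto simp: T_def)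
    qed
    show "y x > 0" if x: "z < x" "x \<le> 1"
    proof (rule ccontr)
      assume "\<not> y x > 0"
      hence "y x \<le> 0" by simp
      have "\<exists>u. x \<le> u \<and> u \<le> 1 \<and> y u = 0"
        by (rule IVT') (use \<open>y x \<le> 0\<close> y_one x in simp, use \<open>y x \<le> 0\<close> y_one x in simp, use x in simp,
            rule y_cont, use x zz t0m in auto)
      then obtain u where u: "x \<le> u" "u \<le> 1" "y u = 0" by blast
      hence "u \<in> T" using x zz by (auto simp: T_def)
      hence "u \<le> z" by (rule z(2))
      thus False using u x by simp
    qed
  qed
qed

lemma convexity_part:
  assumes z: "-1 < z" "z < 1" "y z = 0" "\<And>x. z < x \<Longrightarrow> x \<le> 1 \<Longrightarrow> y x > 0"
  shows "yd z > 0" "\<And>s. z \<le> s \<Longrightarrow> s \<le> 1 \<Longrightarrow> y s \<ge> yd z * (s - z)"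
proof -
  define W0 where "W0 s = (1 - s^2) * yd s" for s
  have dW0: "DERIV W0 s :> - p * y s" if "-1 < s" "s < 3" for s
  proof -
    have D: "DERIV W0 s :> (- (2 * s)) * yd s + (1 - s^2) * ydd s"
      unfolding W0_def by (auto intro!: derivative_eq_intros dy[OF that] dy1[OF that] simp: power2_eq_square algebra_simps)
    have "(- (2 * s)) * yd s + (1 - s^2) * ydd s = - p * y s + ((1 - s^2) * ydd s - 2 * s * yd s + p * y s)"
      by (simp add: algebra_simps)
    also have "\<dots> = - p * y s" using ode[OF that] by simp
    finally show ?thesis by (rule DERIV_cong[OF D])
  qed
  define f where "f s = (2 * s * yd s - p * y s) * (1 - s^2)" for s
  have df: "DERIV f s :> (2 - p) * (1 - s^2) * yd s" if "-1 < s" "s < 3" for s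
  proof -
    have "DERIV f s :> (2 * yd s + 2 * s * ydd s - p * yd s) * (1 - s^2) + (2 * s * yd s - p * y s) * (- (2 * s))"
      unfolding f_def by (auto intro!: derivative_eq_intros dy[OF that] dy1[OF that] simp: power2_eq_square algebra_simps)
    moreover have "(2 * yd s + 2 * s * ydd s - p * yd s) * (1 - s^2) + (2 * s * yd s - p * y s) * (- (2 * s))
       = (2 - p) * (1 - s^2) * yd s + 2 * s * ((1 - s^2) * ydd s - 2 * s * yd s + p * y s)"
      by (simp add: algebra_simps power2_eq_square)
    ultimately show ?thesis using ode[OF that] by simp
  qed
  have ydpos: "yd s > 0" if s: "z \<le> s" "s < 1" for s
  proof -
    obtain \<xi> where xi: "s < \<xi>" "\<xi> < 1" "W0 1 - W0 s = (1 - s) * (- p * y \<xi>)"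
      using MVT2[OF s(2), of W0 "\<lambda>s. - p * y s"] dW0 z s by force
    have "y \<xi> > 0" using z(4) xi s by simp
    hence "W0 1 - W0 s < 0" using xi p2 by (simp add: mult_pos_neg)
    hence "W0 s > 0" by (simp add: W0_def)
    moreover have "1 - s^2 > 0" using s z by (simp add: abs_square_less_1)
    ultimately show ?thesis by (simp add: W0_def zero_less_mult_iff)
  qed
  show "yd z > 0" using ydpos z by simp
  have yddpos: "ydd s > 0" if s: "z \<le> s" "s < 1" for s
  proof -
    obtain \<xi> where xi: "s < \<xi>" "\<xi> < 1" "f 1 - f s = (1 - s) * ((2 - p) * (1 - \<xi>^2) * yd \<xi>)"
      using MVT2[OF s(2), of f "\<lambda>s. (2 - p) * (1 - s^2) * yd s"] df z s by force
    have "yd \<xi> > 0" using ydpos xi s by simp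
    moreover have "1 - \<xi>^2 > 0" using s z xi by (simp add: abs_square_less_1)
    ultimately have "(2 - p) * (1 - \<xi>^2) * yd \<xi> < 0" using p2 by (simp add: mult_neg_pos)
    hence "f 1 - f s < 0" using xi by (simp add: mult_pos_neg)
    hence fs: "f s > 0" by (simp add: f_def)
    have s2: "1 - s^2 > 0" using s z by (simp add: abs_square_less_1)
    hence "2 * s * yd s - p * y s > 0" using fs by (simp add: f_def zero_less_mult_iff)
    moreover have "(1 - s^2) * ydd s = 2 * s * yd s - p * y s" using ode[of s] s z by simp
    ultimately have "(1 - s^2) * ydd s > 0" by simp
    thus ?thesis using s2 by (simp add: zero_less_mult_iff)
  qed
  fix s assume s: "z \<le> s" "s \<le> 1"
  show "y s \<ge> yd z * (s - z)"
  proof (cases "s = z")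
    case True thus ?thesis using z by simp
  next
    case False
    hence zs: "z < s" using s by simp
    define g where "g x = y x - yd z * (x - z)" for x
    obtain \<xi> where xi: "z < \<xi>" "\<xi> < s" "g s - g z = (s - z) * (yd \<xi> - yd z)"
      using MVT2[OF zs, of g "\<lambda>x. yd x - yd z"] z s
      unfolding g_def by (force intro!: derivative_eq_intros dy)
    obtain \<eta> where eta: "z < \<eta>" "\<eta> < \<xi>" "yd \<xi> - yd z = (\<xi> - z) * ydd \<eta>"
      using MVT2[OF xi(1), of yd ydd] dy1 z xi s by force
    have "ydd \<eta> > 0" using yddpos eta xi s by simp
    hence "yd \<xi> - yd z > 0" using eta by simp
    hence "g s - g z > 0" using xi by simp
    thus ?thesis using z by (simp add: g_def)
  qed
qed
end



lemma dA: "-1 < (s::real) \<Longrightarrow> DERIV (\<lambda>s. ((1+s)/2) powr r) s :> r * ((1+s)/2) powr (r-1) / 2"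
proof -
  assume s: "-1 < s"
  have g: "DERIV (\<lambda>s. (1+s)/2) s :> 1/2" by (auto intro!: derivative_eq_intros)
  have "DERIV (\<lambda>s. ((1+s)/2) powr r) s :> r * ((1+s)/2) powr (r-1) * (1/2)"
    by (rule DERIV_chain2[OF _ g]) (rule has_real_derivative_powr, use s in simp)
  thus ?thesis by simp
qed

lemma dB: "(s::real) < 1 \<Longrightarrow> DERIV (\<lambda>s. ((1-s)/2) powr r) s :> - (r * ((1-s)/2) powr (r-1) / 2)"
proof -
  assume s: "s < 1"
  have g: "DERIV (\<lambda>s. (1-s)/2) s :> -1/2" by (auto intro!: derivative_eq_intros)
  have "DERIV (\<lambda>s. ((1-s)/2) powr r) s :> r * ((1-s)/2) powr (r-1) * (-1/2)"
    by (rule DERIV_chain2[OF _ g]) (rule has_real_derivative_powr, use s in simp)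
  thus ?thesis by simp
qed

lemma h_part:
  fixes p z c :: real
  assumes p2: "p > 2" and z: "-1 < z" "z < 1" and zs0: "2 * p powr (-1/(p-1)) - 1 \<le> z"
    and c: "c = (1+z)/(1-z)"
  shows "hc p c z = 0" "DERIV (hc p c) z :> deriv (hc p c) z" "deriv (hc p c) z > 0"
    "\<And>s. z \<le> s \<Longrightarrow> s \<le> 1 \<Longrightarrow> hc p c s \<le> hc p c z + deriv (hc p c) z * (s - z)"
proof -
  define C where "C = c powr p"
  have cpos: "c > 0" unfolding c using z by (intro divide_pos_pos) auto
  have Cpos: "C > 0" using cpos by (simp add: C_def)
  define h1 where "h1 s = p * ((1+s)/2) powr (p-1) / 2 + C * (p * ((1-s)/2) powr (p-1) / 2)" for s
  define h2 where "h2 s = (p-1) * (p * ((1+s)/2) powr (p-1-1) / 2) / 2 - C * ((p-1) * (p * ((1-s)/2) powr (p-1-1) / 2) / 2)" for s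
  have hdef: "hc p c = (\<lambda>s. ((1+s)/2) powr p - C * ((1-s)/2) powr p)"
    by (auto simp: hc_def C_def)
  have dh: "DERIV (hc p c) s :> h1 s" if "-1 < s" "s < 1" for s
  proof -
    have "DERIV (\<lambda>s. ((1+s)/2) powr p - C * ((1-s)/2) powr p) s :>
       p * ((1+s)/2) powr (p-1) / 2 - C * (- (p * ((1-s)/2) powr (p-1) / 2))"
      by (rule DERIV_diff[OF dA[OF that(1)] DERIV_cmult[OF dB[OF that(2)]]])
    thus ?thesis unfolding hdef h1_def by simp
  qed
  have dh1: "DERIV h1 s :> h2 s" if "-1 < s" "s < 1" for s
  proof -
    have "DERIV h1 s :> p * ((p-1) * ((1+s)/2) powr (p-1-1) / 2) / 2 + C * (p * (- ((p-1) * ((1-s)/2) powr (p-1-1) / 2)) / 2)"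
      unfolding h1_def
      by (intro DERIV_add DERIV_cmult DERIV_cdivide dA[OF that(1)] dB[OF that(2)])
    thus ?thesis by (simp add: h2_def algebra_simps)
  qed
  define m where "m = h1 z"
  have Dz: "DERIV (hc p c) z :> m" using dh[OF z] by (simp add: m_def)
  hence dz: "deriv (hc p c) z = m" by (rule DERIV_imp_deriv)
  thus "DERIV (hc p c) z :> deriv (hc p c) z" using Dz by simp
  define A where "A = (1+z)/2"
  define B where "B = (1-z)/2"
  have Apos: "A > 0" and Bpos: "B > 0" using z by (simp_all add: A_def B_def)
  have cB: "c * B = A" using z by (simp add: c A_def B_def field_simps)
  have hz: "hc p c z = 0"
  proof -
    have "C * B powr p = (c * B) powr p" using cpos Bpos by (simp add: C_def powr_mult)
    thus ?thesis using cB by (simp add: hdef A_def B_def)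
  qed
  thus "hc p c z = 0" .
  have "C * B powr (p-1) = c * A powr (p-1)"
  proof -
    have "C = c * c powr (p-1)" using powr_succ[OF cpos, of "p-1"] by (simp add: C_def)
    moreover have "c powr (p-1) * B powr (p-1) = A powr (p-1)" using cpos Bpos cB by (simp add: powr_mult[symmetric])
    ultimately show ?thesis by (simp add: mult_ac)
  qed
  hence mE: "m = p * A powr (p-1) / 2 * (1 + c)" by (simp add: m_def h1_def A_def[symmetric] B_def[symmetric] algebra_simps)
  have e2: "(1 + c) * (1 - z) = 2" using z by (simp add: c field_simps)
  have "m * (1 - z) = p * A powr (p-1) / 2 * ((1 + c) * (1 - z))" unfolding mE by (simp add: mult_ac)
  also have "\<dots> = p * A powr (p-1)" unfolding e2 by simp
  finally have m1z: "m * (1 - z) = p * A powr (p-1)" .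
  have "p * A powr (p-1) \<ge> 1"
  proof -
    define q where "q = p powr (-1/(p-1))"
    have "q \<le> A" using zs0 by (simp add: q_def A_def)
    hence "q powr (p-1) \<le> A powr (p-1)" using p2 by (intro powr_mono2) (auto simp: q_def)
    moreover have "q powr (p-1) = p powr (-1)" using p2 by (simp add: q_def powr_powr)
    moreover have "p powr (-1) = 1 / p" using p2 by (simp add: powr_minus_divide abs_of_pos[of p])
    ultimately show ?thesis using p2 by (simp add: field_simps)
  qed
  hence m1: "m * (1 - z) \<ge> 1" using m1z by simp
  have mpos: "m > 0"
  proof (rule ccontr)
    assume "\<not> m > 0"
    hence "m * (1 - z) \<le> 0" using z by (intro mult_nonpos_nonneg) auto
    thus False using m1 by simp
  qed
  thus "deriv (hc p c) z > 0" using dz by simp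
  have h_one: "hc p c 1 = 1" by (simp add: hdef)
  have hcont: "continuous_on {z..1} (hc p c)"
  proof -
    have c1: "continuous_on {z..1} (\<lambda>s. ((1+s)/2) powr p)"
      by (rule continuous_on_powr) (use z in \<open>auto intro!: continuous_intros\<close>)
    have c2: "continuous_on {z..1} (\<lambda>s. ((1-s)/2) powr p)"
      by (rule continuous_on_powr') (use p2 in \<open>auto intro!: continuous_intros\<close>)
    show ?thesis unfolding hdef by (intro continuous_intros c1 c2)
  qed
  have sign: "h2 u2 > 0" if u: "-1 < u1" "u1 < u2" "u2 < 1" "h2 u1 > 0" for u1 u2
  proof -
    have k: "0 < (p-1) * p / 4" using p2 by simp
    have h2e: "h2 u = (p-1) * p / 4 * (((1+u)/2) powr (p-2) - C * ((1-u)/2) powr (p-2))" for u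
      by (simp add: h2_def algebra_simps)
    from u(4) have "((1+u1)/2) powr (p-2) - C * ((1-u1)/2) powr (p-2) > 0"
      unfolding h2e using k by (simp add: zero_less_mult_iff)
    moreover have "((1+u1)/2) powr (p-2) < ((1+u2)/2) powr (p-2)"
      using u p2 by (intro powr_less_mono2) auto
    moreover have "((1-u2)/2) powr (p-2) < ((1-u1)/2) powr (p-2)"
      using u p2 by (intro powr_less_mono2) auto
    moreover have "C * ((1-u2)/2) powr (p-2) < C * ((1-u1)/2) powr (p-2)"
      using Cpos \<open>((1-u2)/2) powr (p-2) < ((1-u1)/2) powr (p-2)\<close> by simp
    ultimately have "((1+u2)/2) powr (p-2) - C * ((1-u2)/2) powr (p-2) > 0"
      by linarith
    thus ?thesis unfolding h2e using k by simp
  qed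
  fix s assume s: "z \<le> s" "s \<le> 1"
  define \<phi> where "\<phi> x = m * (x - z) - hc p c x" for x
  show "hc p c s \<le> hc p c z + deriv (hc p c) z * (s - z)"
  proof (rule ccontr)
    assume "\<not> ?thesis"
    hence neg: "\<phi> s < 0" using hz dz by (simp add: \<phi>_def)
    have "s \<noteq> z" using neg hz by (auto simp: \<phi>_def)
    hence zs: "z < s" using s by simp
    have "\<phi> 1 \<ge> 0" using m1 h_one by (simp add: \<phi>_def algebra_simps)
    hence s1: "s < 1" using neg s by (cases "s = 1") auto
    have dphi: "DERIV \<phi> x :> m - h1 x" if "-1 < x" "x < 1" for x
      unfolding \<phi>_def by (auto intro!: derivative_eq_intros dh[OF that])
    obtain t1 where t1: "z < t1" "t1 < s" "\<phi> s - \<phi> z = (s - z) * (m - h1 t1)"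
      using MVT2[OF zs, of \<phi> "\<lambda>x. m - h1 x"] dphi z s1 by force
    have "\<phi> z = 0" using hz by (simp add: \<phi>_def)
    hence "(s - z) * (m - h1 t1) < 0" using t1 neg by simp
    hence ht1: "h1 t1 > m" using zs by (simp add: mult_less_0_iff)
    have "continuous_on {s..1} \<phi>" unfolding \<phi>_def
      by (intro continuous_intros continuous_on_subset[OF hcont]) (use s in auto)
    moreover have "\<phi> differentiable (at x)" if "s < x" "x < 1" for x
    proof -
      have "DERIV \<phi> x :> m - h1 x" using dphi[of x] that z s by simp
      thus ?thesis unfolding real_differentiable_def by blast
    qed
    ultimately obtain l t2 where t2: "s < t2" "t2 < 1" "DERIV \<phi> t2 :> l" "\<phi> 1 - \<phi> s = (1 - s) * l"
      using MVT[OF s1, of \<phi>] by blast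
    have "l = m - h1 t2" using DERIV_unique[OF t2(3) dphi] t2 z s by simp
    moreover have "(1 - s) * l > 0" using t2 neg \<open>\<phi> 1 \<ge> 0\<close> by simp
    ultimately have ht2: "h1 t2 < m" using s1 by (simp add: zero_less_mult_iff)
    obtain u1 where u1: "z < u1" "u1 < t1" "h1 t1 - h1 z = (t1 - z) * h2 u1"
      using MVT2[OF t1(1), of h1 h2] dh1 z t1 s1 by force
    have "(t1 - z) * h2 u1 > 0" using u1(3) ht1 by (simp add: m_def)
    hence "h2 u1 > 0" using u1 by (simp add: zero_less_mult_iff)
    have t12: "t1 < t2" using t1 t2 by simp
    obtain u2 where u2: "t1 < u2" "u2 < t2" "h1 t2 - h1 t1 = (t2 - t1) * h2 u2"
      using MVT2[OF t12, of h1 h2] dh1 z t1 t2 by force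
    have "(t2 - t1) * h2 u2 < 0" using u2 ht1 ht2 by simp
    hence "h2 u2 < 0" using t12 by (simp add: mult_less_0_iff)
    moreover have "h2 u2 > 0" using sign[of u1 u2] u1 u2 t2 z \<open>h2 u1 > 0\<close> by simp
    ultimately show False by simp
  qed
qed


theorem lemma5p5:
  fixes \<alpha> p z c a :: real
  assumes "\<alpha> > 0" and "p = \<alpha> * (\<alpha> + 1)" and "p > 2"
    and "z = zp \<alpha>"
    and "c = (1 + z) / (1 - z)"
    and "a = deriv (hc p c) z / deriv (legendreL \<alpha>) z"
  shows "z \<in> {-1<..<1} \<and> legendreL \<alpha> z = 0
     \<and> a * legendreL \<alpha> z = 0 \<and> hc p c z = 0
     \<and> legendreL \<alpha> differentiable (at z) \<and> hc p c differentiable (at z)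
     \<and> deriv (\<lambda>s. a * legendreL \<alpha> s) z = deriv (hc p c) z
     \<and> (\<forall>s\<in>{z..1}. hc p c s \<le> hc p c z + deriv (hc p c) z * (s - z)
                   \<and> hc p c z + deriv (hc p c) z * (s - z) \<le> a * legendreL \<alpha> s)"
proof -
  note p2 = assms(3)
  have dy: "\<And>s. -1 < s \<Longrightarrow> s < 3 \<Longrightarrow> DERIV (legendreL \<alpha>) s :> Ly1 \<alpha> s" by (rule L_deriv)
  have dy1: "\<And>s. -1 < s \<Longrightarrow> s < 3 \<Longrightarrow> DERIV (Ly1 \<alpha>) s :> Ly2 \<alpha> s" by (rule Ly1_deriv)
  have ode: "\<And>s. -1 < s \<Longrightarrow> s < 3 \<Longrightarrow> (1 - s^2) * Ly2 \<alpha> s - 2 * s * Ly1 \<alpha> s + p * legendreL \<alpha> s = 0"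
    using L_ode assms(2) by simp
  have y1: "legendreL \<alpha> 1 = 1" by (rule L_one)
  obtain z0 where z0: "2 * p powr (-1/(p-1)) - 1 \<le> z0" "-1 < z0" "z0 < 1" "legendreL \<alpha> z0 = 0"
    "\<And>x. -1 < x \<Longrightarrow> x < 1 \<Longrightarrow> legendreL \<alpha> x = 0 \<Longrightarrow> x \<le> z0"
    "\<And>x. z0 < x \<Longrightarrow> x \<le> 1 \<Longrightarrow> legendreL \<alpha> x > 0"
    using greatest_zero[OF p2 dy dy1 ode y1] by blast
  have "zp \<alpha> = z0" unfolding zp_def
    by (rule Greatest_equality) (use z0 in auto)
  hence zz: "z = z0" using assms(4) by simp
  have cv1: "Ly1 \<alpha> z > 0" and cv2: "\<And>s. z \<le> s \<Longrightarrow> s \<le> 1 \<Longrightarrow> legendreL \<alpha> s \<ge> Ly1 \<alpha> z * (s - z)"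
    using convexity_part[OF p2 dy dy1 ode y1, of z] z0 zz by auto
  have zr: "-1 < z" "z < 1" "2 * p powr (-1/(p-1)) - 1 \<le> z" "legendreL \<alpha> z = 0" using z0 zz by auto
  note hp = h_part[OF p2 zr(1) zr(2) zr(3) assms(5)]
  define m where "m = deriv (hc p c) z"
  have Dy: "DERIV (legendreL \<alpha>) z :> Ly1 \<alpha> z" using dy zr by simp
  hence dyz: "deriv (legendreL \<alpha>) z = Ly1 \<alpha> z" by (rule DERIV_imp_deriv)
  have aE: "a = m / Ly1 \<alpha> z" using assms(6) dyz by (simp add: m_def)
  have apos: "a > 0" using hp(3) cv1 aE by (simp add: m_def)
  have Da: "DERIV (\<lambda>s. a * legendreL \<alpha> s) z :> a * Ly1 \<alpha> z" by (rule DERIV_cmult[OF Dy])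
  have "a * Ly1 \<alpha> z = m" using aE cv1 by simp
  hence da: "deriv (\<lambda>s. a * legendreL \<alpha> s) z = deriv (hc p c) z"
    using DERIV_imp_deriv[OF Da] by (simp add: m_def)
  have d1: "legendreL \<alpha> differentiable (at z)" using Dy unfolding real_differentiable_def by blast
  have d2: "hc p c differentiable (at z)" using hp(2) unfolding real_differentiable_def by blast
  have ineq: "\<forall>s\<in>{z..1}. hc p c s \<le> hc p c z + deriv (hc p c) z * (s - z)
                   \<and> hc p c z + deriv (hc p c) z * (s - z) \<le> a * legendreL \<alpha> s"
  proof
    fix s assume s: "s \<in> {z..1}"
    have "hc p c z + deriv (hc p c) z * (s - z) = a * (Ly1 \<alpha> z * (s - z))"
      using hp(1) \<open>a * Ly1 \<alpha> z = m\<close> by (simp add: m_def)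
    also have "\<dots> \<le> a * legendreL \<alpha> s" using cv2[of s] s apos by (intro mult_left_mono) auto
    finally show "hc p c s \<le> hc p c z + deriv (hc p c) z * (s - z)
                   \<and> hc p c z + deriv (hc p c) z * (s - z) \<le> a * legendreL \<alpha> s"
      using hp(4)[of s] s by auto
  qed
  show ?thesis using zr hp(1) d1 d2 da ineq by simp
qed

end
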